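(* Let $L=10^6$, $\rho<L^{-16}$, and let $\xi=(\xi_i)_{i\in\mathbb{Z}}$ be i.i.d. with $\mathbb{P}(\xi_i\ge n)=\rho^n$ for $n\in\{0,1,2,\dots\}$. With $H_m,B_m$ defined below from $\xi$, let $p_{k,h,b}=\mathbb{P}[H_{(k,0)}=h,\,B_{(k,0)}=b]$. Then for every $k,b\ge0$ and $h\ge1$, $$p_{k,h,b}\le L^{-\left(k+\frac{h}{b+1}\right)-2h-13}.$$
   Context: Let $L_k=L^k$. For $k\ge0$ and $i\in\mathbb{Z}$ let $I_{(k,i)}=[iL_k,(i+1)L_k)\cap\mathbb{Z}$ and $M_k=\{k\}\times\mathbb{Z}$. For $m=(k+1,i)\in M_{k+1}$ let $\mathcal{Q}_m=\{(k,iL+j):0\le j\le L-1\}$. Define $H_m$ recursively: $H_{(0,i)}=\xi_i$; for $m\in M_{k+1}$, $H_m=0$ if every $m'\in\mathcal{Q}_m$ is good; $H_m=H_{m_1}-1$ if $m_1$ is the only bad element of $\mathcal{Q}_m$; $H_m=1+\sum_{i=1}^r H_{m_i}$ if $m_1,\dots,m_r$ with $r\ge2$ are the bad elements of $\mathcal{Q}_m$. Here $m$ is good if $H_m=0$ and bad otherwise. Define $B_m$ recursively: $B_{(0,i)}=0$; for $m\in M_{k+1}$, $B_m=0$ if $m$ is good; $B_m=B_{m'}$ if $m$ is bad and $m'$ is the only bad element of $\mathcal{Q}_m$; $B_m=k+1$ if $\mathcal{Q}_m$ contains more than one bad element. *)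

theory Defs
  imports "HOL-Probability.Probability"
begin

text \<open>Block (k,i) with parameter L (L_k = L^k). The children of (k+1,i) are
  (k, i*L + j), 0 <= j <= L-1.  The field x :: int => nat is the configuration xi.\<close>

fun Hf :: "nat \<Rightarrow> (int \<Rightarrow> nat) \<Rightarrow> nat \<Rightarrow> int \<Rightarrow> int" where
  "Hf L x 0 i = int (x i)"
| "Hf L x (Suc k) i =
     (let bad = filter (\<lambda>j. Hf L x k (i * int L + int j) \<noteq> 0) [0..<L] in
      if bad = [] then 0
      else if length bad = 1 then Hf L x k (i * int L + int (hd bad)) - 1
      else 1 + sum_list (map (\<lambda>j. Hf L x k (i * int L + int j)) bad))"

fun Bf :: "nat \<Rightarrow> (int \<Rightarrow> nat) \<Rightarrow> nat \<Rightarrow> int \<Rightarrow> nat" where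
  "Bf L x 0 i = 0"
| "Bf L x (Suc k) i =
     (let bad = filter (\<lambda>j. Hf L x k (i * int L + int j) \<noteq> 0) [0..<L] in
      if Hf L x (Suc k) i = 0 then 0
      else if length bad = 1 then Bf L x k (i * int L + int (hd bad))
      else Suc k)"

end

theory Submission imports Defs "HOL-Library.FuncSet" begin

definition Phi :: "nat \<Rightarrow> (nat \<Rightarrow> int) \<Rightarrow> int" where
  "Phi L f = (let bad = filter (\<lambda>j. f j \<noteq> 0) [0..<L] in
      if bad = [] then 0
      else if length bad = 1 then f (hd bad) - 1
      else 1 + sum_list (map f bad))"

lemma Hf_Suc_Phi: "Hf L x (Suc k) i = Phi L (\<lambda>j. Hf L x k (i * int L + int j))"
  by (simp add: Phi_def)

lemma Phi_cong:
  assumes "\<And>j. j < L \<Longrightarrow> f j = g j"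
  shows "Phi L f = Phi L g"
proof -
  have fe: "filter (\<lambda>j. f j \<noteq> 0) [0..<L] = filter (\<lambda>j. g j \<noteq> 0) [0..<L]"
    by (rule filter_cong) (auto simp: assms)
  define bad where "bad = filter (\<lambda>j. g j \<noteq> 0) [0..<L]"
  have mem: "\<And>j. j \<in> set bad \<Longrightarrow> j < L" by (auto simp: bad_def)
  have m: "map f bad = map g bad" using mem assms by auto
  have s: "sum_list (map f bad) = sum_list (map g bad)" by (simp only: m)
  have "bad \<noteq> [] \<Longrightarrow> f (hd bad) = g (hd bad)"
    using mem assms hd_in_set by blast
  then show ?thesis unfolding Phi_def Let_def fe bad_def[symmetric] s by auto
qed

lemma Phi_nonneg:
  assumes "\<And>j. j < L \<Longrightarrow> 0 \<le> f j"
  shows "0 \<le> Phi L f"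
proof -
  define bad where "bad = filter (\<lambda>j. f j \<noteq> 0) [0..<L]"
  have mem: "\<And>j. j \<in> set bad \<Longrightarrow> j < L \<and> f j \<noteq> 0" by (auto simp: bad_def)
  show ?thesis
  proof (cases "bad = []")
    case True then show ?thesis unfolding Phi_def Let_def bad_def[symmetric] by simp
  next
    case False
    then have "hd bad \<in> set bad" by simp
    with mem assms have "1 \<le> f (hd bad)" by force
    moreover have "0 \<le> sum_list (map f bad)"
      by (rule sum_list_nonneg) (use mem assms in auto)
    ultimately show ?thesis unfolding Phi_def Let_def bad_def[symmetric] by simp
  qed
qed

lemma Hf_nonneg: "0 \<le> Hf L x k i"
proof (induction k arbitrary: i)
  case 0 then show ?case by simp
next
  case (Suc k) then show ?case unfolding Hf_Suc_Phi by (intro Phi_nonneg) auto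
qed

lemma block_child:
  fixes i j t :: int and L :: nat
  assumes "0 \<le> j" "j < int L"
    and "(i * int L + j) * int L ^ k \<le> t" "t < (i * int L + j + 1) * int L ^ k"
  shows "i * int L ^ Suc k \<le> t \<and> t < (i + 1) * int L ^ Suc k"
proof -
  have P: "0 \<le> int L ^ k" by simp
  have "i * int L ^ Suc k = (i * int L) * int L ^ k" by simp
  also have "\<dots> \<le> (i * int L + j) * int L ^ k" using assms(1) P by (intro mult_right_mono) auto
  finally have 1: "i * int L ^ Suc k \<le> t" using assms(3) by linarith
  have "(i * int L + j + 1) * int L ^ k \<le> (i * int L + int L) * int L ^ k"
    using assms(2) P by (intro mult_right_mono) auto
  also have "\<dots> = (i + 1) * int L ^ Suc k" by (simp add: algebra_simps)
  finally show ?thesis using 1 assms(4) by linarith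
qed

lemma Hf_local:
  assumes "\<And>t. i * int L ^ k \<le> t \<Longrightarrow> t < (i + 1) * int L ^ k \<Longrightarrow> x t = y t"
  shows "Hf L x k i = Hf L y k i"
  using assms
proof (induction k arbitrary: i)
  case 0 then show ?case by simp
next
  case (Suc k)
  show ?case unfolding Hf_Suc_Phi
  proof (rule Phi_cong)
    fix j assume j: "j < L"
    show "Hf L x k (i * int L + int j) = Hf L y k (i * int L + int j)"
    proof (rule Suc.IH)
      fix t assume "(i * int L + int j) * int L ^ k \<le> t" "t < (i * int L + int j + 1) * int L ^ k"
      with block_child[of "int j" L i k t] j have "i * int L ^ Suc k \<le> t \<and> t < (i + 1) * int L ^ Suc k"
        by auto
      then show "x t = y t" using Suc.prems by auto
    qed
  qed
qed

lemma block_disj: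
  fixes a b t :: int and P :: int
  assumes "0 < P" "a * P \<le> t" "t < (a+1) * P" "b * P \<le> t" "t < (b+1) * P"
  shows "a = b"
proof (rule ccontr)
  assume "a \<noteq> b"
  then consider "a + 1 \<le> b" | "b + 1 \<le> a" by linarith
  then show False
  proof cases
    case 1 then have "(a+1) * P \<le> b * P" using assms(1) by (intro mult_right_mono) auto
    then show False using assms by linarith
  next
    case 2 then have "(b+1) * P \<le> a * P" using assms(1) by (intro mult_right_mono) auto
    then show False using assms by linarith
  qed
qed

definition Gset :: "nat \<Rightarrow> nat \<Rightarrow> nat list set" where
  "Gset L h = {gs. length gs = L \<and> set gs \<subseteq> {0..h} \<and> 2 \<le> length (filter (\<lambda>a. a \<noteq> 0) gs)
                   \<and> sum_list gs = h - 1}"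

lemma Phi_cases:
  assumes nn: "\<And>j. j < L \<Longrightarrow> 0 \<le> f j" and P: "Phi L f = int h" and h: "1 \<le> h"
  shows "(\<exists>j<L. f j = int h + 1) \<or> map (\<lambda>j. nat (f j)) [0..<L] \<in> Gset L h"
proof -
  define bad where "bad = filter (\<lambda>j. f j \<noteq> 0) [0..<L]"
  have mem: "\<And>j. j \<in> set bad \<Longrightarrow> j < L \<and> f j \<noteq> 0" by (auto simp: bad_def)
  show ?thesis
  proof (cases "bad = []")
    case True then show ?thesis using P h unfolding Phi_def Let_def bad_def[symmetric] by simp
  next
    case False
    show ?thesis
    proof (cases "length bad = 1")
      case True
      then have "f (hd bad) = int h + 1" using P False unfolding Phi_def Let_def bad_def[symmetric] by simp
      moreover have "hd bad < L" using mem False hd_in_set by blast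
      ultimately show ?thesis by blast
    next
      case len: False
      then have eq: "Phi L f = 1 + sum_list (map f bad)" using False unfolding Phi_def Let_def bad_def[symmetric] by simp
      have s1: "sum_list (map f bad) = sum_list (map f [0..<L])"
        unfolding bad_def by (rule sum_list_map_filter) auto
      define gs where "gs = map (\<lambda>j. nat (f j)) [0..<L]"
      have si: "int (sum_list gs) = sum_list (map f [0..<L])"
        unfolding gs_def interv_sum_list_conv_sum_set_nat of_nat_sum using nn by simp
      have sumgs: "sum_list gs = h - 1" using si s1 eq P h by linarith
      have fl: "filter (\<lambda>a. a \<noteq> 0) gs = map (\<lambda>j. nat (f j)) bad"
        unfolding gs_def bad_def filter_map o_def
        by (intro arg_cong[where f="map _"] filter_cong) (use nn in force)+
      have "2 \<le> length (filter (\<lambda>a. a \<noteq> 0) gs)" unfolding fl using False len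
        by (cases bad) (auto simp: Suc_le_eq)
      moreover have "set gs \<subseteq> {0..h}"
      proof
        fix a assume "a \<in> set gs"
        then have "a \<le> sum_list gs" by (rule member_le_sum_list) auto
        then show "a \<in> {0..h}" using sumgs by auto
      qed
      ultimately have "gs \<in> Gset L h" using sumgs unfolding Gset_def gs_def by auto
      then show ?thesis unfolding gs_def by blast
    qed
  qed
qed

definition LS :: "nat \<Rightarrow> nat \<Rightarrow> nat list set" where
  "LS h n = {gs. set gs \<subseteq> {0..h} \<and> length gs = n}"

definition nz :: "nat list \<Rightarrow> nat" where "nz gs = length (filter (\<lambda>a. a \<noteq> 0) gs)"

definition FF :: "(nat \<Rightarrow> real) \<Rightarrow> nat \<Rightarrow> nat \<Rightarrow> nat \<Rightarrow> real" where
  "FF w h n d = (\<Sum>gs\<in>LS h n. if d \<le> nz gs then prod_list (map w gs) else 0)"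

lemma finite_LS: "finite (LS h n)"
  unfolding LS_def by (rule finite_lists_length_eq) auto

lemma sum_LS_Suc: "(\<Sum>gs\<in>LS h (Suc n). F gs) = (\<Sum>a\<in>{0..h}. \<Sum>gs\<in>LS h n. F (a # gs))"
proof -
  have e: "LS h (Suc n) = (\<lambda>p. snd p # fst p) ` (LS h n \<times> {0..h})"
    unfolding LS_def lists_length_Suc_eq by (simp add: case_prod_beta')
  have i: "inj_on (\<lambda>p. snd p # fst p) (LS h n \<times> {0..h})" by (auto simp: inj_on_def)
  have "(\<Sum>gs\<in>LS h (Suc n). F gs) = (\<Sum>p\<in>LS h n \<times> {0..h}. F (snd p # fst p))"
    unfolding e using sum.reindex[OF i, of F] by (simp add: o_def)
  also have "\<dots> = (\<Sum>gs\<in>LS h n. \<Sum>a\<in>{0..h}. F (a # gs))"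
    by (simp add: sum.cartesian_product case_prod_beta)
  also have "\<dots> = (\<Sum>a\<in>{0..h}. \<Sum>gs\<in>LS h n. F (a # gs))" by (rule sum.swap)
  finally show ?thesis .
qed

lemma FF_Suc:
  assumes w0: "w 0 = 1"
  shows "FF w h (Suc n) d = FF w h n d + (\<Sum>a\<in>{1..h}. w a) * FF w h n (d - 1)"
proof -
  have ins: "{0..h} = insert 0 {1..h}" by auto
  have "FF w h (Suc n) d = (\<Sum>a\<in>{0..h}. \<Sum>gs\<in>LS h n.
          if d \<le> nz (a # gs) then prod_list (map w (a # gs)) else 0)"
    unfolding FF_def by (rule sum_LS_Suc)
  also have "\<dots> = FF w h n d + (\<Sum>a\<in>{1..h}. \<Sum>gs\<in>LS h n.
          if d \<le> nz (a # gs) then prod_list (map w (a # gs)) else 0)"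
  proof -
    have "(\<Sum>gs\<in>LS h n. if d \<le> nz (0 # gs) then prod_list (map w (0 # gs)) else 0) = FF w h n d"
      unfolding FF_def nz_def by (intro sum.cong refl) (simp add: w0)
    then show ?thesis unfolding ins by (subst sum.insert) auto
  qed
  also have "(\<Sum>a\<in>{1..h}. \<Sum>gs\<in>LS h n.
          if d \<le> nz (a # gs) then prod_list (map w (a # gs)) else 0)
        = (\<Sum>a\<in>{1..h}. w a * FF w h n (d - 1))"
    unfolding FF_def sum_distrib_left
    by (intro sum.cong refl) (auto simp: nz_def)
  finally show ?thesis by (simp add: sum_distrib_right)
qed

lemma FF_bound:
  assumes w0: "w 0 = 1" and wn: "\<And>a. 0 \<le> w a"
  shows "FF w h n d \<le> real n ^ d * (\<Sum>a\<in>{1..h}. w a) ^ d * (1 + (\<Sum>a\<in>{1..h}. w a)) ^ n"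
proof (induction n arbitrary: d)
  case 0
  have "LS h 0 = {[]}" unfolding LS_def by auto
  then show ?case by (cases d) (auto simp: FF_def nz_def)
next
  case (Suc n)
  define S where "S = (\<Sum>a\<in>{1..h}. w a)"
  have S0: "0 \<le> S" unfolding S_def by (intro sum_nonneg wn)
  have IH: "\<And>d. FF w h n d \<le> real n ^ d * S ^ d * (1 + S) ^ n" using Suc.IH unfolding S_def .
  show ?case unfolding S_def[symmetric] FF_Suc[of w h n d, OF w0, folded S_def]
  proof (cases d)
    case 0
    have "FF w h n 0 + S * FF w h n 0 = (1 + S) * FF w h n 0" by (simp add: algebra_simps)
    also have "\<dots> \<le> (1 + S) * (1 + S) ^ n" using IH[of 0] S0 by (intro mult_left_mono) auto
    finally show "FF w h n d + S * FF w h n (d - 1) \<le> real (Suc n) ^ d * S ^ d * (1 + S) ^ Suc n"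
      using 0 by simp
  next
    case (Suc e)
    have X0: "0 \<le> S ^ Suc e * (1 + S) ^ n" using S0 by simp
    have "FF w h n d + S * FF w h n (d - 1) \<le> real n ^ Suc e * S ^ Suc e * (1 + S) ^ n
            + S * (real n ^ e * S ^ e * (1 + S) ^ n)"
      using IH[of "Suc e"] IH[of e] S0 Suc by (intro add_mono mult_left_mono) auto
    also have "\<dots> = (real n ^ e * (real n + 1)) * (S ^ Suc e * (1 + S) ^ n)"
      by (simp add: algebra_simps)
    also have "\<dots> \<le> (real (Suc n) ^ e * real (Suc n)) * (S ^ Suc e * (1 + S) ^ n)"
      by (intro mult_right_mono X0 mult_mono power_mono) auto
    also have "\<dots> \<le> (real (Suc n) ^ e * real (Suc n)) * (S ^ Suc e * (1 + S) ^ n) * (1 + S)"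
    proof -
      have aux: "\<And>Y. 0 \<le> Y \<Longrightarrow> Y \<le> Y * (1 + S)"
        using S0 by (metis mult_left_mono mult.right_neutral le_add_same_cancel1)
      show ?thesis by (rule aux) (use X0 in simp)
    qed
    also have "\<dots> = real (Suc n) ^ d * S ^ d * (1 + S) ^ Suc n"
      using Suc by (simp add: algebra_simps)
    finally show "FF w h n d + S * FF w h n (d - 1) \<le> real (Suc n) ^ d * S ^ d * (1 + S) ^ Suc n" .
  qed
qed


lemma allsets_PiM:
  fixes K :: "int set"
  assumes K: "finite K" and A: "A \<subseteq> space (PiM K (\<lambda>_. count_space (UNIV::nat set)))"
  shows "A \<in> sets (PiM K (\<lambda>_. count_space (UNIV::nat set)))"
proof -
  have sp: "space (PiM K (\<lambda>_. count_space (UNIV::nat set))) = PiE K (\<lambda>_. UNIV)"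
    by (simp add: space_PiM)
  have "countable (PiE K (\<lambda>_. (UNIV::nat set)))" using K by (intro countable_PiE) auto
  then have cA: "countable A" using A sp countable_subset by metis
  have "A = (\<Union>z\<in>A. PiE K (\<lambda>t. {z t}))"
  proof -
    have "\<And>z. z \<in> A \<Longrightarrow> PiE K (\<lambda>t. {z t}) = {z}"
      using A sp by (intro PiE_singleton) (auto simp: PiE_def)
    then show ?thesis by auto
  qed
  also have "\<dots> \<in> sets (PiM K (\<lambda>_. count_space (UNIV::nat set)))"
    using cA K by (intro sets.countable_UN'' sets_PiM_I_finite) auto
  finally show ?thesis .
qed

lemma meas_any_PiM:
  fixes K :: "int set" and g :: "(int \<Rightarrow> nat) \<Rightarrow> 'b::countable"
  assumes K: "finite K"
  shows "g \<in> measurable (PiM K (\<lambda>_. count_space (UNIV::nat set))) (count_space UNIV)"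
  unfolding measurable_count_space_eq2_countable
  using K by (auto intro!: allsets_PiM)

definition ext0 :: "int set \<Rightarrow> (int \<Rightarrow> nat) \<Rightarrow> int \<Rightarrow> nat" where
  "ext0 K z = (\<lambda>t. if t \<in> K then z t else 0)"

definition blk :: "nat \<Rightarrow> nat \<Rightarrow> int \<Rightarrow> int set" where
  "blk L k a = {a * int L ^ k ..< (a + 1) * int L ^ k}"

lemma finite_blk: "finite (blk L k a)" by (simp add: blk_def)

lemma Hf_restrict:
  "Hf L x k a = Hf L (ext0 (blk L k a) (restrict x (blk L k a))) k a"
  by (rule Hf_local) (auto simp: ext0_def blk_def)

definition Jset :: "nat \<Rightarrow> nat list \<Rightarrow> nat set" where
  "Jset L gs = {j. j < L \<and> gs ! j \<noteq> 0}"

lemma Gset_sub_LS: "Gset L h \<subseteq> LS h L"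
  unfolding Gset_def LS_def by auto

lemma finite_Gset: "finite (Gset L h)"
  using finite_subset[OF Gset_sub_LS finite_LS] .

lemma finite_Jset: "finite (Jset L gs)" unfolding Jset_def by auto

lemma Jset_ne: assumes "gs \<in> Gset L h" shows "Jset L gs \<noteq> {}"
proof -
  from assms have "2 \<le> length (filter (\<lambda>a. a \<noteq> 0) gs)" and len: "length gs = L"
    unfolding Gset_def by auto
  then have "filter (\<lambda>a. a \<noteq> 0) gs \<noteq> []" by auto
  then obtain a where "a \<in> set gs" "a \<noteq> 0" by (auto simp: filter_empty_conv)
  then obtain j where "j < length gs" "gs ! j \<noteq> 0" by (auto simp: in_set_conv_nth)
  then show ?thesis using len unfolding Jset_def by auto
qed



lemma num_core:
  fixes Lr c x y S E q :: real and h :: nat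
  assumes Lr: "Lr = 10^6" and c: "0 < c" and x: "0 < x" "x \<le> y" "x \<le> 2/Lr^5" and y: "1/Lr^5 \<le> y"
    and S: "0 \<le> S" "S \<le> c*q" and q: "0 \<le> q" "Lr^10 * c * q^2 \<le> 16 / Lr"
    and E: "0 \<le> E" "E \<le> 3" and h: "1 \<le> h"
  shows "Lr * (c * x^(h+1)) + y^(h-1) * (Lr^2 * S^2 * E) \<le> (c / Lr^3) * y^h"
proof -
  have Lp: "0 < Lr" using Lr by simp
  have yp: "0 < y" using x by simp
  have yh: "0 \<le> y^h" using yp by simp
  have "Lr * (c * x^(h+1)) = (Lr * c * x) * x^h" by (simp add: algebra_simps)
  also have "\<dots> \<le> (Lr * c * (2/Lr^5)) * y^h"
    using x c Lp by (intro mult_mono power_mono) auto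
  also have "Lr * c * (2/Lr^5) = (2/Lr) * (c / Lr^3)" using Lp by (simp add: field_simps power_eq_if)
  finally have U: "Lr * (c * x^(h+1)) \<le> (2/Lr) * (c / Lr^3) * y^h" .
  have yh1: "y^(h-1) \<le> y^h * Lr^5"
  proof -
    have "y^h = y^(h-1) * y" using h by (metis Suc_diff_le diff_Suc_1 power_Suc2)
    then have "y^h * Lr^5 = y^(h-1) * (y * Lr^5)" by simp
    moreover have "1 \<le> y * Lr^5" using y Lp by (simp add: field_simps)
    moreover have "0 \<le> y^(h-1)" using yp by simp
    ultimately show ?thesis by (metis mult_left_mono mult.right_neutral)
  qed
  have S2: "S^2 \<le> c^2 * q^2" using S by (metis power_mono power_mult_distrib)
  have "y^(h-1) * (Lr^2 * S^2 * E) \<le> (y^h * Lr^5) * (Lr^2 * (c^2 * q^2) * 3)"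
    using yh1 S2 E Lp yp by (intro mult_mono) auto
  also have "\<dots> = 3 * (c / Lr^3) * y^h * (Lr^10 * c * q^2)"
    using Lp by (simp add: field_simps power_eq_if)
  also have "\<dots> \<le> 3 * (c / Lr^3) * y^h * (16 / Lr)"
    using q c Lp yh by (intro mult_left_mono) auto
  also have "\<dots> = (48 / Lr) * (c / Lr^3) * y^h" by (simp add: field_simps)
  finally have B: "y^(h-1) * (Lr^2 * S^2 * E) \<le> (48 / Lr) * (c / Lr^3) * y^h" .
  have "(2/Lr) * (c / Lr^3) * y^h + (48 / Lr) * (c / Lr^3) * y^h = (50 / Lr) * ((c / Lr^3) * y^h)"
    by (simp add: algebra_simps)
  also have "\<dots> \<le> 1 * ((c / Lr^3) * y^h)"
    using Lr c yh by (intro mult_right_mono) auto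
  finally show ?thesis using U B by simp
qed


lemma geo_bound:
  fixes t :: real assumes t: "0 \<le> t" "t < 1"
  shows "(\<Sum>a\<in>{1..h}. t^a) \<le> 1 / (1 - t)"
proof -
  have "(\<Sum>a\<in>{1..h}. t^a) \<le> (\<Sum>a<Suc h. t^a)"
    using t by (intro sum_mono2) auto
  also have "\<dots> = (1 - t^Suc h) / (1 - t)" using t sum_gp_strict[of t "Suc h"] by simp
  also have "\<dots> \<le> 1 / (1 - t)" using t by (intro divide_right_mono) auto
  finally show ?thesis .
qed

lemma u_bound:
  fixes u :: real assumes u: "0 < u" "u \<le> 1"
  shows "(\<Sum>a\<in>{1..h}. ((2-u)/(2-u/2))^a) \<le> 4 / u"
proof -
  define t where "t = (2-u)/(2-u/2)"
  have t0: "0 \<le> t" "t < 1" using u by (auto simp: t_def field_simps)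
  have p1: "0 < 4 - u" "0 < 2 - u/2" using u by auto
  have "t = (4 - 2*u)/(4-u)" unfolding t_def using p1 by (simp add: field_simps)
  then have "1 - t = u/(4-u)" using p1 by (simp add: field_simps)
  then have "1 / (1 - t) = (4 - u) / u" using u by simp
  also have "\<dots> \<le> 4 / u" using u by (intro divide_right_mono) auto
  finally show ?thesis using geo_bound[OF t0, of h] unfolding t_def by linarith
qed

lemma E_bound:
  fixes S :: real assumes "0 \<le> S" "real n * S \<le> 1"
  shows "(1 + S)^n \<le> 3"
proof -
  have "(1 + S)^n \<le> exp S ^ n" using assms by (intro power_mono) auto
  also have "\<dots> = exp (real n * S)" by (simp add: exp_of_nat_mult)
  also have "\<dots> \<le> exp 1" using assms by simp
  also have "\<dots> \<le> 3" by (rule exp_le)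
  finally show ?thesis .
qed


lemma prodJ:
  fixes c x y :: real
  assumes G: "gs \<in> Gset L h" and y: "0 < y"
    and w: "w = (\<lambda>a. if a = 0 then 1 else c * (x / y) ^ a)"
  shows "(\<Prod>j\<in>Jset L gs. c * x ^ (gs ! j)) = y ^ (h - 1) * prod_list (map w gs)"
proof -
  have len: "length gs = L" and sg: "sum_list gs = h - 1" using G unfolding Gset_def by auto
  have pl: "prod_list (map w gs) = (\<Prod>j\<in>{0..<L}. w (gs ! j))"
    by (subst prod.list_conv_set_nth) (simp add: len)
  have yp: "y ^ (h - 1) = (\<Prod>j\<in>{0..<L}. y ^ (gs ! j))"
    unfolding sg[symmetric] by (subst sum.list_conv_set_nth) (simp add: len power_sum)
  have "y ^ (h - 1) * prod_list (map w gs) = (\<Prod>j\<in>{0..<L}. y ^ (gs ! j) * w (gs ! j))"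
    unfolding pl yp by (simp add: prod.distrib)
  also have "\<dots> = (\<Prod>j\<in>{0..<L}. if gs ! j \<noteq> 0 then c * x ^ (gs ! j) else 1)"
    using y by (intro prod.cong refl) (auto simp: w power_divide)
  also have "\<dots> = (\<Prod>j\<in>{j\<in>{0..<L}. gs ! j \<noteq> 0}. c * x ^ (gs ! j))"
    by (rule prod.inter_filter[symmetric]) simp
  also have "{j\<in>{0..<L}. gs ! j \<noteq> 0} = Jset L gs" unfolding Jset_def by auto
  finally show ?thesis by simp
qed

definition cc :: "nat \<Rightarrow> real" where "cc k = 1 / (10^6::real) ^ (11 + 3 * k)"
definition xx :: "nat \<Rightarrow> real" where "xx k = (2 - (1/2)^k) / (10^6::real) ^ 5"

lemma step_num:
  assumes h: "1 \<le> h"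
  shows "real (10^6::nat) * (cc k * xx k ^ (h + 1))
     + (\<Sum>gs\<in>Gset (10^6) h. \<Prod>j\<in>Jset (10^6) gs. cc k * xx k ^ (gs ! j))
     \<le> cc (Suc k) * xx (Suc k) ^ h"
proof -
  define Lr :: real where "Lr = 10^6"
  define c where "c = cc k"
  define x where "x = xx k"
  define y where "y = xx (Suc k)"
  define u :: real where "u = (1/2)^k"
  define w where "w = (\<lambda>a::nat. if a = 0 then 1 else c * (x / y) ^ a)"
  define S where "S = (\<Sum>a\<in>{1..h}. w a)"
  define q :: real where "q = 4 * 2^k"
  have Lp: "0 < Lr" by (simp add: Lr_def)
  have u: "0 < u" "u \<le> 1" by (auto simp: u_def power_le_one)
  have uq: "4 / u = q" by (simp add: u_def q_def power_one_over)
  have xd: "x = (2 - u) / Lr^5" and yd: "y = (2 - u/2) / Lr^5"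
    by (simp_all add: x_def y_def xx_def u_def Lr_def)
  have cp: "0 < c" by (simp add: c_def cc_def)
  have xp: "0 < x" using u Lp by (simp add: xd)
  have xy: "x \<le> y" using u Lp by (simp add: xd yd divide_right_mono)
  have x2: "x \<le> 2 / Lr^5" using u Lp by (simp add: xd divide_right_mono)
  have y1: "1 / Lr^5 \<le> y" using u Lp by (simp add: yd divide_right_mono)
  have yp: "0 < y" using xp xy by simp
  have w0: "w 0 = 1" and wn: "\<And>a. 0 \<le> w a" using cp xp yp by (auto simp: w_def)
  have tdef: "x / y = (2-u)/(2-u/2)" using Lp by (simp add: xd yd)
  have S_eq: "S = c * (\<Sum>a\<in>{1..h}. ((2-u)/(2-u/2))^a)"
    unfolding S_def w_def tdef sum_distrib_left by (intro sum.cong refl) auto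
  have S0: "0 \<le> S" unfolding S_def using wn by (intro sum_nonneg) auto
  have Sq: "S \<le> c * q" unfolding S_eq uq[symmetric] using u_bound[OF u, of h] cp
    by (intro mult_left_mono) auto
  have q0: "0 \<le> q" by (simp add: q_def)
  have pk: "(2::real)^k * 2^k \<le> (Lr^3)^k"
  proof -
    have "(2::real)^k * 2^k = 4^k" by (simp add: power_mult_distrib[symmetric])
    also have "\<dots> \<le> (Lr^3)^k" by (intro power_mono) (auto simp: Lr_def)
    finally show ?thesis .
  qed
  have p11: "Lr * Lr^10 = Lr^11" by (simp add: power_Suc[symmetric] del: power_Suc)
  have cL: "c = 1 / (Lr^11 * (Lr^3)^k)" by (simp add: c_def cc_def Lr_def power_add power_mult)
  have qcond: "Lr^10 * c * q^2 \<le> 16 / Lr"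
  proof -
    have "Lr^10 * c * q^2 = 16 * (2^k * 2^k) / (Lr * (Lr^3)^k)"
      using Lp by (simp add: cL q_def power2_eq_square field_simps p11)
    also have "\<dots> \<le> 16 * (Lr^3)^k / (Lr * (Lr^3)^k)"
      using pk Lp by (intro divide_right_mono mult_left_mono) auto
    also have "\<dots> = 16 / Lr" using Lp by simp
    finally show ?thesis .
  qed
  have LS1: "real (10^6::nat) * S \<le> 1"
  proof -
    have "real (10^6::nat) * S \<le> Lr * (c * q)" using Sq Lp by (simp add: Lr_def)
    also have "\<dots> = 4 * 2^k / (Lr^10 * (Lr^3)^k)" using Lp by (simp add: cL q_def field_simps p11)
    also have "\<dots> \<le> 1"
    proof -
      have "(2::real)^k \<le> (Lr^3)^k" by (intro power_mono) (auto simp: Lr_def)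
      moreover have "4 \<le> Lr^10" by (simp add: Lr_def)
      ultimately have "4 * 2^k \<le> Lr^10 * (Lr^3)^k" by (intro mult_mono) auto
      then show ?thesis using Lp by simp
    qed
    finally show ?thesis .
  qed
  have E: "(1 + S) ^ (10^6) \<le> 3" using E_bound[OF S0 LS1] .
  have E0: "0 \<le> (1 + S) ^ (10^6)" using S0 by simp
  have "(\<Sum>gs\<in>Gset (10^6) h. \<Prod>j\<in>Jset (10^6) gs. c * x ^ (gs ! j))
      = (\<Sum>gs\<in>Gset (10^6) h. y ^ (h - 1) * prod_list (map w gs))"
    using yp by (intro sum.cong refl prodJ[OF _ _ w_def])
  also have "\<dots> = y ^ (h - 1) * (\<Sum>gs\<in>Gset (10^6) h. if 2 \<le> nz gs then prod_list (map w gs) else 0)"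
    unfolding sum_distrib_left by (intro sum.cong refl) (auto simp: Gset_def nz_def)
  also have "\<dots> \<le> y ^ (h - 1) * FF w h (10^6) 2"
    unfolding FF_def using yp wn
    by (intro mult_left_mono sum_mono2[OF finite_LS Gset_sub_LS]) (auto intro!: prod_list_nonneg)
  also have "\<dots> \<le> y ^ (h - 1) * (Lr^2 * S^2 * (1 + S) ^ (10^6))"
    using FF_bound[of w h "10^6" 2, OF w0 wn] yp unfolding S_def[symmetric]
    by (intro mult_left_mono) (auto simp: Lr_def)
  finally have Bd: "(\<Sum>gs\<in>Gset (10^6) h. \<Prod>j\<in>Jset (10^6) gs. c * x ^ (gs ! j))
      \<le> y ^ (h - 1) * (Lr^2 * S^2 * (1 + S) ^ (10^6))" .
  have core: "Lr * (c * x^(h+1)) + y^(h-1) * (Lr^2 * S^2 * (1 + S) ^ (10^6)) \<le> (c / Lr^3) * y^h"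
    by (rule num_core[OF Lr_def cp xp xy x2 y1 S0 Sq q0 qcond E0 E h])
  have cS: "c / Lr^3 = cc (Suc k)" by (simp add: c_def cc_def Lr_def power_add)
  show ?thesis using Bd core unfolding cS[symmetric] c_def[symmetric] x_def[symmetric] y_def[symmetric]
    by (simp add: Lr_def)
qed

locale setting = prob_space M for M :: "'a measure" +
  fixes \<xi> :: "int \<Rightarrow> 'a \<Rightarrow> nat" and L :: nat
  assumes indep: "indep_vars (\<lambda>_. count_space UNIV) \<xi> UNIV" and Lpos: "0 < L"
begin

definition Y :: "nat \<Rightarrow> int \<Rightarrow> 'a \<Rightarrow> int" where
  "Y k a \<omega> = Hf L (\<lambda>t. \<xi> t \<omega>) k a"

definition Ev :: "nat \<Rightarrow> int \<Rightarrow> int \<Rightarrow> 'a set" where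
  "Ev k a v = {\<omega> \<in> space M. Y k a \<omega> = v}"

lemma xi_meas: "\<xi> t \<in> measurable M (count_space UNIV)"
  using indep unfolding indep_vars_def by auto

lemma Y_eq: "Y k a \<omega> = Hf L (ext0 (blk L k a) (\<lambda>t\<in>blk L k a. \<xi> t \<omega>)) k a"
  unfolding Y_def by (subst Hf_restrict) simp

lemma Y_meas: "Y k a \<in> measurable M (count_space UNIV)"
proof -
  have "(\<lambda>\<omega>. Hf L (ext0 (blk L k a) (\<lambda>t\<in>blk L k a. \<xi> t \<omega>)) k a) \<in> measurable M (count_space UNIV)"
    by (rule measurable_comp[OF measurable_restrict[OF xi_meas] meas_any_PiM[OF finite_blk],
          unfolded o_def])
  then show ?thesis by (simp add: Y_eq[abs_def])
qed

lemma Ev_sets: "Ev k a v \<in> events"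
proof -
  have "Ev k a v = Y k a -` {v} \<inter> space M" by (auto simp: Ev_def)
  then show ?thesis using measurable_sets[OF Y_meas, of "{v}"] by simp
qed

lemma Ev_indep:
  assumes J: "finite J" "J \<noteq> {}"
  shows "prob (\<Inter>j\<in>J. Ev k (i * int L + int j) (v j)) = (\<Prod>j\<in>J. prob (Ev k (i * int L + int j) (v j)))"
proof -
  define K where "K j = blk L k (i * int L + int j)" for j
  have disj: "disjoint_family_on K UNIV"
    unfolding disjoint_family_on_def
  proof (intro ballI impI)
    fix m n :: nat assume "m \<noteq> n"
    show "K m \<inter> K n = {}"
    proof (rule ccontr)
      assume "K m \<inter> K n \<noteq> {}"
      then obtain t where "t \<in> K m" "t \<in> K n" by blast
      then have "i * int L + int m = i * int L + int n"
        unfolding K_def blk_def using Lpos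
        by (intro block_disj[of "int L ^ k" _ t]) (auto simp: algebra_simps)
      then show False using \<open>m \<noteq> n\<close> by simp
    qed
  qed
  have ind1: "indep_vars (\<lambda>j. PiM (K j) (\<lambda>_. count_space UNIV)) (\<lambda>j \<omega>. restrict (\<lambda>t. \<xi> t \<omega>) (K j)) UNIV"
    by (rule indep_vars_restrict[OF indep _ disj]) auto
  have ind2: "indep_vars (\<lambda>_. count_space UNIV)
      (\<lambda>j \<omega>. Hf L (ext0 (K j) (restrict (\<lambda>t. \<xi> t \<omega>) (K j))) k (i * int L + int j)) UNIV"
    by (rule indep_vars_compose2[OF ind1]) (simp add: K_def meas_any_PiM finite_blk)
  have ind3: "indep_vars (\<lambda>_. count_space UNIV) (\<lambda>j. Y k (i * int L + int j)) UNIV"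
    using ind2 unfolding K_def Y_eq[abs_def] .
  have IS: "indep_sets (\<lambda>j. {Y k (i * int L + int j) -` A \<inter> space M | A. A \<in> sets (count_space UNIV)}) UNIV"
    using ind3 unfolding indep_vars_def2 by (rule conjunct2)
  have MEM: "\<forall>j\<in>J. Ev k (i * int L + int j) (v j) \<in>
      {Y k (i * int L + int j) -` A \<inter> space M | A. A \<in> sets (count_space UNIV)}"
  proof
    fix j
    have "Ev k (i * int L + int j) (v j) = Y k (i * int L + int j) -` {v j} \<inter> space M"
      by (auto simp: Ev_def)
    then show "Ev k (i * int L + int j) (v j) \<in>
      {Y k (i * int L + int j) -` A \<inter> space M | A. A \<in> sets (count_space UNIV)}"
      by (intro CollectI exI[of _ "{v j}"]) simp
  qed
  show ?thesis
    by (rule indep_setsD[OF IS subset_UNIV J(2) J(1) MEM])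
qed

lemma Ev_Suc_subset:
  assumes h: "1 \<le> h"
  shows "Ev (Suc k) i (int h) \<subseteq> (\<Union>j\<in>{..<L}. Ev k (i * int L + int j) (int h + 1))
      \<union> (\<Union>gs\<in>Gset L h. \<Inter>j\<in>Jset L gs. Ev k (i * int L + int j) (int (gs ! j)))"
proof
  fix \<omega> assume w: "\<omega> \<in> Ev (Suc k) i (int h)"
  define f where "f j = Y k (i * int L + int j) \<omega>" for j
  have sp: "\<omega> \<in> space M" using w by (auto simp: Ev_def)
  have nn: "\<And>j. j < L \<Longrightarrow> 0 \<le> f j" unfolding f_def Y_def by (rule Hf_nonneg)
  have P: "Phi L f = int h" using w unfolding Ev_def Y_def f_def Hf_Suc_Phi by simp
  from Phi_cases[OF nn P h]
  show "\<omega> \<in> (\<Union>j\<in>{..<L}. Ev k (i * int L + int j) (int h + 1))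
      \<union> (\<Union>gs\<in>Gset L h. \<Inter>j\<in>Jset L gs. Ev k (i * int L + int j) (int (gs ! j)))"
  proof
    assume "\<exists>j<L. f j = int h + 1"
    then show ?thesis using sp unfolding Ev_def f_def by auto
  next
    assume G: "map (\<lambda>j. nat (f j)) [0..<L] \<in> Gset L h"
    have "\<omega> \<in> (\<Inter>j\<in>Jset L (map (\<lambda>j. nat (f j)) [0..<L]). Ev k (i * int L + int j)
             (int (map (\<lambda>j. nat (f j)) [0..<L] ! j)))"
    proof
      fix j assume "j \<in> Jset L (map (\<lambda>j. nat (f j)) [0..<L])"
      then have j: "j < L" unfolding Jset_def by auto
      then have "int (map (\<lambda>j. nat (f j)) [0..<L] ! j) = f j" using nn[OF j] by simp
      then show "\<omega> \<in> Ev k (i * int L + int j) (int (map (\<lambda>j. nat (f j)) [0..<L] ! j))"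
        using sp unfolding Ev_def f_def by simp
    qed
    then show ?thesis using G by blast
  qed
qed

lemma prob_step:
  assumes h: "1 \<le> h"
  shows "prob (Ev (Suc k) i (int h)) \<le> (\<Sum>j<L. prob (Ev k (i * int L + int j) (int h + 1)))
      + (\<Sum>gs\<in>Gset L h. \<Prod>j\<in>Jset L gs. prob (Ev k (i * int L + int j) (int (gs ! j))))"
proof -
  define U1 where "U1 = (\<Union>j\<in>{..<L}. Ev k (i * int L + int j) (int h + 1))"
  define U2 where "U2 = (\<Union>gs\<in>Gset L h. \<Inter>j\<in>Jset L gs. Ev k (i * int L + int j) (int (gs ! j)))"
  have Isets: "\<And>gs. gs \<in> Gset L h \<Longrightarrow> (\<Inter>j\<in>Jset L gs. Ev k (i * int L + int j) (int (gs ! j))) \<in> events"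
    using Jset_ne finite_Jset by (intro sets.finite_INT Ev_sets) auto
  have U1s: "U1 \<in> events" unfolding U1_def by (intro sets.finite_UN Ev_sets) auto
  have U2s: "U2 \<in> events" unfolding U2_def using finite_Gset Isets by (intro sets.finite_UN) auto
  have "prob (Ev (Suc k) i (int h)) \<le> prob (U1 \<union> U2)"
    using Ev_Suc_subset[OF h, of k i] U1s U2s unfolding U1_def[symmetric] U2_def[symmetric]
    by (intro finite_measure_mono) auto
  also have "\<dots> \<le> prob U1 + prob U2" using U1s U2s by (rule measure_Un_le)
  also have "prob U1 \<le> (\<Sum>j<L. prob (Ev k (i * int L + int j) (int h + 1)))"
    unfolding U1_def by (rule finite_measure_subadditive_finite) (auto intro: Ev_sets)
  also have "prob U2 \<le> (\<Sum>gs\<in>Gset L h. prob (\<Inter>j\<in>Jset L gs. Ev k (i * int L + int j) (int (gs ! j))))"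
    unfolding U2_def using Isets finite_Gset by (intro finite_measure_subadditive_finite) auto
  also have "\<dots> = (\<Sum>gs\<in>Gset L h. \<Prod>j\<in>Jset L gs. prob (Ev k (i * int L + int j) (int (gs ! j))))"
    using Jset_ne finite_Jset by (intro sum.cong refl Ev_indep) auto
  finally show ?thesis by simp
qed

end

lemma base_num:
  fixes \<rho> Lr :: real
  assumes r0: "0 \<le> \<rho>" and r1: "\<rho> \<le> 1 / Lr^16" and L: "1 \<le> Lr" and h: "1 \<le> h"
  shows "\<rho> ^ h \<le> 1 / Lr^11 * (1 / Lr^5) ^ h"
proof -
  have "\<rho> ^ h \<le> (1 / Lr^16) ^ h" using r0 r1 by (intro power_mono) auto
  also have "\<dots> = (1 / Lr^11) ^ h * (1 / Lr^5) ^ h"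
    by (simp add: power_mult_distrib[symmetric] power_add[symmetric])
  also have "\<dots> \<le> (1 / Lr^11) * (1 / Lr^5) ^ h"
  proof (intro mult_right_mono)
    have "(1 / Lr^11) ^ h \<le> (1 / Lr^11) ^ 1"
      using h L by (intro power_decreasing) auto
    then show "(1 / Lr^11) ^ h \<le> 1 / Lr^11" by simp
  qed (use L in simp)
  finally show ?thesis .
qed

locale setting2 = setting +
  fixes \<rho> :: real
  assumes L6: "L = 10^6" and marg: "\<And>i n. measure M {\<omega> \<in> space M. \<xi> i \<omega> \<ge> n} = \<rho> ^ n"
    and rho: "\<rho> < (10^6 :: real) powr (-16)"
begin

lemma base:
  assumes h: "1 \<le> h"
  shows "prob (Ev 0 i (int h)) \<le> cc 0 * xx 0 ^ h"
proof -
  have sub: "Ev 0 i (int h) \<subseteq> {\<omega> \<in> space M. \<xi> i \<omega> \<ge> h}" by (auto simp: Ev_def Y_def)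
  have ms: "{\<omega> \<in> space M. \<xi> i \<omega> \<ge> h} \<in> events"
  proof -
    have "{\<omega> \<in> space M. \<xi> i \<omega> \<ge> h} = \<xi> i -` {h..} \<inter> space M" by auto
    then show ?thesis using measurable_sets[OF xi_meas, of "{h..}" i] by simp
  qed
  have r0: "0 \<le> \<rho>"
  proof -
    have "\<rho> = \<rho> ^ 1" by simp
    also have "\<dots> = measure M {\<omega> \<in> space M. \<xi> i \<omega> \<ge> 1}" by (rule marg[symmetric])
    finally show "0 \<le> \<rho>" by simp
  qed
  have r1: "\<rho> \<le> 1 / (10^6::real)^16" using rho by (simp add: powr_minus_divide powr_realpow)
  have "prob (Ev 0 i (int h)) \<le> \<rho> ^ h" using finite_measure_mono[OF sub ms] marg by simp
  also have "\<dots> \<le> 1 / (10^6::real)^11 * (1 / (10^6::real)^5) ^ h"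
    by (rule base_num[OF r0 r1 _ h]) simp
  also have "\<dots> = cc 0 * xx 0 ^ h" by (simp add: cc_def xx_def)
  finally show ?thesis .
qed

lemma main: "\<forall>i h. 1 \<le> h \<longrightarrow> prob (Ev k i (int h)) \<le> cc k * xx k ^ h"
proof (induction k)
  case 0 then show ?case using base by blast
next
  case (Suc k)
  show ?case
  proof (intro allI impI)
    fix i h assume h: "1 \<le> (h::nat)"
    have "prob (Ev (Suc k) i (int h)) \<le> (\<Sum>j<L. prob (Ev k (i * int (L) + int j) (int h + 1)))
      + (\<Sum>gs\<in>Gset (L) h. \<Prod>j\<in>Jset (L) gs. prob (Ev k (i * int (L) + int j) (int (gs ! j))))"
      by (rule prob_step[OF h])
    also have "\<dots> \<le> (\<Sum>j<L. cc k * xx k ^ (h + 1))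
      + (\<Sum>gs\<in>Gset (L) h. \<Prod>j\<in>Jset (L) gs. cc k * xx k ^ (gs ! j))"
    proof (intro add_mono sum_mono prod_mono conjI)
      fix j :: nat
      show "prob (Ev k (i * int (L) + int j) (int h + 1)) \<le> cc k * xx k ^ (h + 1)"
        using Suc.IH[rule_format, of "h+1" "i * int (L) + int j"] by (simp add: add.commute)
    next
      fix gs j assume "gs \<in> Gset (L) h" "j \<in> Jset (L) gs"
      then have "1 \<le> gs ! j" unfolding Jset_def by auto
      then show "prob (Ev k (i * int (L) + int j) (int (gs ! j))) \<le> cc k * xx k ^ (gs ! j)"
        using Suc.IH by blast
    qed simp
    also have "\<dots> = real L * (cc k * xx k ^ (h + 1))
      + (\<Sum>gs\<in>Gset (L) h. \<Prod>j\<in>Jset (L) gs. cc k * xx k ^ (gs ! j))" by simp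
    also have "\<dots> \<le> cc (Suc k) * xx (Suc k) ^ h" using step_num[OF h, of k] by (simp add: L6)
    finally show "prob (Ev (Suc k) i (int h)) \<le> cc (Suc k) * xx (Suc k) ^ h" .
  qed
qed

end

lemma final_num:
  fixes k b h :: nat assumes h: "1 \<le> h"
  shows "cc k * xx k ^ h \<le> (10^6 :: real) powr (- (real k + real h / (real b + 1)) - 2 * real h - 13)"
proof -
  define Lr :: real where "Lr = 10^6"
  have Lp: "0 < Lr" "1 \<le> Lr" by (auto simp: Lr_def)
  have conv: "\<And>n. 1 / Lr^n = Lr powr (- real n)" using Lp by (simp add: powr_minus_divide powr_realpow)
  have hb: "real h / (real b + 1) \<le> real h" by (simp add: divide_le_eq_1 field_simps)
  show ?thesis
  proof (cases k)
    case 0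
    have "cc k * xx k ^ h = 1 / Lr^11 * (1 / Lr^5) ^ h" by (simp add: 0 cc_def xx_def Lr_def)
    also have "\<dots> = 1 / Lr^(11 + 5 * h)" by (simp add: power_add power_mult power_one_over)
    also have "\<dots> = Lr powr (- real (11 + 5 * h))" by (rule conv)
    also have "\<dots> \<le> Lr powr (- (real k + real h / (real b + 1)) - 2 * real h - 13)"
      using hb h Lp by (intro powr_mono) (auto simp: 0)
    finally show ?thesis by (simp add: Lr_def)
  next
    case (Suc k')
    have x4: "xx k \<le> 1 / Lr^4"
    proof -
      have "xx k \<le> 2 / Lr^5" by (simp add: xx_def Lr_def divide_right_mono)
      also have "\<dots> \<le> 1 / Lr^4" by (simp add: Lr_def)
      finally show ?thesis .
    qed
    have "(1/2::real)^k \<le> 1" by (rule power_le_one) auto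
    then have x0: "0 \<le> xx k" by (simp add: xx_def)
    have ce: "cc k = 1 / Lr^(11 + 3 * k)" by (simp add: cc_def Lr_def)
    have "cc k * xx k ^ h \<le> 1 / Lr^(11 + 3 * k) * (1 / Lr^4) ^ h"
      unfolding ce using x4 x0 Lp by (intro mult_left_mono power_mono) auto
    also have "\<dots> = 1 / Lr^(11 + 3 * k + 4 * h)" by (simp add: power_add power_mult power_one_over)
    also have "\<dots> = Lr powr (- real (11 + 3 * k + 4 * h))" by (rule conv)
    also have "\<dots> \<le> Lr powr (- (real k + real h / (real b + 1)) - 2 * real h - 13)"
      using hb h Lp by (intro powr_mono) (auto simp: Suc)
    finally show ?thesis by (simp add: Lr_def)
  qed
qed

theorem lemma3p2:
  fixes M :: "'a measure" and \<xi> :: "int \<Rightarrow> 'a \<Rightarrow> nat" and \<rho> :: real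
    and k b h :: nat
  assumes "prob_space M"
    and "\<rho> < (10^6 :: real) powr (-16)"
    and "prob_space.indep_vars M (\<lambda>_. count_space UNIV) \<xi> UNIV"
    and "\<And>i n. measure M {\<omega> \<in> space M. \<xi> i \<omega> \<ge> n} = \<rho> ^ n"
    and "h \<ge> 1"
  shows "measure M {\<omega> \<in> space M. Hf (10^6) (\<lambda>i. \<xi> i \<omega>) k 0 = int h
                                 \<and> Bf (10^6) (\<lambda>i. \<xi> i \<omega>) k 0 = b}
         \<le> (10^6 :: real) powr (- (real k + real h / (real b + 1)) - 2 * real h - 13)"
proof -
  have S2: "setting2 M \<xi> (10^6) \<rho>"
  proof (intro setting2.intro setting.intro setting_axioms.intro setting2_axioms.intro)
    show "prob_space M" by (rule assms(1))
    show "prob_space.indep_vars M (\<lambda>_. count_space UNIV) \<xi> UNIV" by (rule assms(3))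
    show "(0::nat) < 10^6" by simp
    show "(10^6::nat) = 10^6" by simp
    show "\<And>i n. measure M {\<omega> \<in> space M. \<xi> i \<omega> \<ge> n} = \<rho> ^ n" by (rule assms(4))
    show "\<rho> < (10^6 :: real) powr (-16)" by (rule assms(2))
  qed
  interpret setting2 M \<xi> "10^6" \<rho> by (rule S2)
  have "measure M {\<omega> \<in> space M. Hf (10^6) (\<lambda>i. \<xi> i \<omega>) k 0 = int h
                                 \<and> Bf (10^6) (\<lambda>i. \<xi> i \<omega>) k 0 = b} \<le> prob (Ev k 0 (int h))"
  proof (rule finite_measure_mono[OF _ Ev_sets])
    show "{\<omega> \<in> space M. Hf (10^6) (\<lambda>i. \<xi> i \<omega>) k 0 = int h
                                 \<and> Bf (10^6) (\<lambda>i. \<xi> i \<omega>) k 0 = b} \<subseteq> Ev k 0 (int h)"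
      unfolding Ev_def Y_def by blast
  qed
  also have "\<dots> \<le> cc k * xx k ^ h" using main assms(5) by auto
  also have "\<dots> \<le> (10^6 :: real) powr (- (real k + real h / (real b + 1)) - 2 * real h - 13)"
    by (rule final_num[OF assms(5)])
  finally show ?thesis .
qed

end
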